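(* For all integers $m\geq 3$ and $n\geq 2$, the graph $C[m]\times P[n+1]$ is antimagic.
   Context: All graphs are finite, undirected and simple. $C[m]$ denotes the cycle on $m$ vertices and $P[k]$ the path on $k$ vertices. The Cartesian product $G_1\times G_2$ of graphs $G_1=(V_1,E_1)$ and $G_2=(V_2,E_2)$ has vertex set $V_1\times V_2$, with $(u_1,u_2)$ adjacent to $(v_1,v_2)$ iff either $u_1=v_1$ and $u_2v_2\in E_2$, or $u_2=v_2$ and $u_1v_1\in E_1$. An antimagic labeling of a graph with $m'$ edges is a bijection $f$ from its edge set to $\{1,\ldots,m'\}$ such that the vertex sums $f^+(v)=\sum_{e\ni v} f(e)$ (sum over edges incident with $v$) are pairwise distinct over all vertices $v$. A graph is antimagic if it admits an antimagic labeling. *)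

theory Defs
  imports Main
begin

record 'a graph =
  verts :: "'a set"
  edges :: "'a set set"

definition simple_graph :: "'a graph \<Rightarrow> bool" where
  "simple_graph G \<longleftrightarrow> finite (verts G) \<and>
     (\<forall>e\<in>edges G. card e = 2 \<and> e \<subseteq> verts G)"

definition cycle_graph :: "nat \<Rightarrow> nat graph" where
  "cycle_graph m = \<lparr> verts = {0..<m}, edges = {{i, (i + 1) mod m} | i. i < m} \<rparr>"

definition path_graph :: "nat \<Rightarrow> nat graph" where
  "path_graph k = \<lparr> verts = {0..<k}, edges = {{i, i + 1} | i. i + 1 < k} \<rparr>"

definition cart_prod :: "'a graph \<Rightarrow> 'b graph \<Rightarrow> ('a \<times> 'b) graph" where
  "cart_prod G H = \<lparr> verts = verts G \<times> verts H,
     edges = {{(u1, u2), (v1, v2)} | u1 u2 v1 v2.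
                u1 \<in> verts G \<and> v1 \<in> verts G \<and> u2 \<in> verts H \<and> v2 \<in> verts H \<and>
                ((u1 = v1 \<and> {u2, v2} \<in> edges H) \<or> (u2 = v2 \<and> {u1, v1} \<in> edges G))} \<rparr>"

definition vertex_sum :: "'a graph \<Rightarrow> ('a set \<Rightarrow> nat) \<Rightarrow> 'a \<Rightarrow> nat" where
  "vertex_sum G f v = (\<Sum>e\<in>{e \<in> edges G. v \<in> e}. f e)"

definition antimagic_labeling :: "'a graph \<Rightarrow> ('a set \<Rightarrow> nat) \<Rightarrow> bool" where
  "antimagic_labeling G f \<longleftrightarrow>
     bij_betw f (edges G) {1..card (edges G)} \<and> inj_on (vertex_sum G f) (verts G)"

definition antimagic :: "'a graph \<Rightarrow> bool" where
  "antimagic G \<longleftrightarrow> (\<exists>f. antimagic_labeling G f)"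

end

theory Submission imports Defs begin

fun Ed :: "nat \<Rightarrow> bool \<times> nat \<times> nat \<Rightarrow> (nat \<times> nat) set" where
  "Ed m (True, i, j) = {(i, j), ((i + 1) mod m, j)}"
| "Ed m (False, i, j) = {(i, j), (i, j + 1)}"

definition Ix :: "nat \<Rightarrow> nat \<Rightarrow> (bool \<times> nat \<times> nat) set" where
  "Ix m n = {(True, i, j) | i j. i < m \<and> j \<le> n} \<union> {(False, i, j) | i j. i < m \<and> j < n}"

lemma edges_eq:
  assumes "m \<ge> 3"
  shows "edges (cart_prod (cycle_graph m) (path_graph (n + 1))) = Ed m ` Ix m n"
proof
  show "edges (cart_prod (cycle_graph m) (path_graph (n + 1))) \<subseteq> Ed m ` Ix m n"
  proof
    fix e assume "e \<in> edges (cart_prod (cycle_graph m) (path_graph (n + 1)))"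
    then have "\<exists>u1 u2 v1 v2. e = {(u1, u2), (v1, v2)} \<and> u1 < m \<and> v1 < m \<and> u2 < Suc n \<and> v2 < Suc n \<and>
      ((u1 = v1 \<and> (\<exists>k. {u2, v2} = {k, k+1} \<and> k < n)) \<or> (u2 = v2 \<and> (\<exists>i. {u1, v1} = {i, (i+1) mod m} \<and> i < m)))"
      unfolding cart_prod_def cycle_graph_def path_graph_def by simp
    then obtain u1 u2 v1 v2 where e: "e = {(u1, u2), (v1, v2)}" and
      h: "u1 < m" "v1 < m" "u2 < Suc n" "v2 < Suc n"
      "(u1 = v1 \<and> (\<exists>k. {u2, v2} = {k, k+1} \<and> k < n)) \<or> (u2 = v2 \<and> (\<exists>i. {u1, v1} = {i, (i+1) mod m} \<and> i < m))"
      by blast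
    from h(5) show "e \<in> Ed m ` Ix m n"
    proof
      assume "u1 = v1 \<and> (\<exists>k. {u2, v2} = {k, k+1} \<and> k < n)"
      then obtain k where k: "u1 = v1" "{u2, v2} = {k, k+1}" "k < n" by blast
      have "(u2 = k \<and> v2 = k+1) \<or> (u2 = k+1 \<and> v2 = k)" using k(2) by (simp add: doubleton_eq_iff)
      then have "e = Ed m (False, u1, k)" using k(1) e by (auto simp: insert_commute)
      moreover have "(False, u1, k) \<in> Ix m n" using k h unfolding Ix_def by auto
      ultimately show ?thesis by blast
    next
      assume "u2 = v2 \<and> (\<exists>i. {u1, v1} = {i, (i+1) mod m} \<and> i < m)"
      then obtain i where k: "u2 = v2" "{u1, v1} = {i, (i+1) mod m}" "i < m" by blast
      have "(u1 = i \<and> v1 = (i+1) mod m) \<or> (u1 = (i+1) mod m \<and> v1 = i)" using k(2) by (simp add: doubleton_eq_iff)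
      then have "e = Ed m (True, i, u2)" using k(1) e by (auto simp: insert_commute)
      moreover have "(True, i, u2) \<in> Ix m n" using k h unfolding Ix_def by auto
      ultimately show ?thesis by blast
    qed
  qed
next
  show "Ed m ` Ix m n \<subseteq> edges (cart_prod (cycle_graph m) (path_graph (n + 1)))"
  proof
    fix e assume "e \<in> Ed m ` Ix m n"
    then obtain t i j where tij: "(t, i, j) \<in> Ix m n" "e = Ed m (t, i, j)" by auto
    show "e \<in> edges (cart_prod (cycle_graph m) (path_graph (n + 1)))"
    proof (cases t)
      case True
      then have "i < m" "j \<le> n" using tij unfolding Ix_def by auto
      moreover have "(i + 1) mod m < m" using assms by simp
      ultimately show ?thesis using tij True unfolding cart_prod_def cycle_graph_def path_graph_def
        apply simp
        apply (rule exI[where x=i], rule exI[where x=j], rule exI[where x="Suc i mod m"], rule exI[where x=j])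
        by auto
    next
      case False
      then have "i < m" "j < n" using tij unfolding Ix_def by auto
      then show ?thesis using tij False unfolding cart_prod_def cycle_graph_def path_graph_def
        apply simp
        apply (rule exI[where x=i], rule exI[where x=j], rule exI[where x=i], rule exI[where x="Suc j"])
        by auto
    qed
  qed
qed


definition sI :: "nat \<Rightarrow> nat \<Rightarrow> nat" where
  "sI m i = (if even i then i div 2 + 1 else m - i div 2)"

fun blk :: "nat \<Rightarrow> bool \<times> nat \<times> nat \<Rightarrow> nat" where
  "blk n (True, i, j) = (if j = n then 0 else n + 1 + j)"
| "blk n (False, i, j) = j + 1"

fun rr :: "nat \<Rightarrow> nat \<Rightarrow> bool \<times> nat \<times> nat \<Rightarrow> nat" where
  "rr m n (True, i, j) = (if j = n \<or> j = 0 then m - i else sI m i)"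
| "rr m n (False, i, j) = i + 1"

definition lab :: "nat \<Rightarrow> nat \<Rightarrow> bool \<times> nat \<times> nat \<Rightarrow> nat" where
  "lab m n p = blk n p * m + rr m n p"

lemma sI_range: "i < m \<Longrightarrow> 1 \<le> sI m i \<and> sI m i \<le> m"
  unfolding sI_def by (cases "even i") (auto elim!: evenE oddE)

lemma sI_inj: "i < m \<Longrightarrow> i' < m \<Longrightarrow> sI m i = sI m i' \<Longrightarrow> i = i'"
  unfolding sI_def by (cases "even i"; cases "even i'") (auto elim!: evenE oddE)

lemma sI_surj: "1 \<le> s \<Longrightarrow> s \<le> m \<Longrightarrow> \<exists>i<m. sI m i = s"
proof (cases "2 * (s - 1) < m")
  case True
  assume "1 \<le> s" "s \<le> m"
  then show ?thesis using True by (intro exI[of _ "2 * (s - 1)"]) (auto simp: sI_def)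
next
  case False
  assume "1 \<le> s" "s \<le> m"
  then show ?thesis using False by (intro exI[of _ "2 * (m - s) + 1"]) (auto simp: sI_def)
qed

lemma rr_range: "p \<in> Ix m n \<Longrightarrow> 1 \<le> rr m n p \<and> rr m n p \<le> m"
  unfolding Ix_def using sI_range by auto

lemma blk_le: "p \<in> Ix m n \<Longrightarrow> blk n p \<le> 2 * n"
  unfolding Ix_def by auto

lemma blk_rr_inj:
  assumes "p \<in> Ix m n" "q \<in> Ix m n" "blk n p = blk n q" "rr m n p = rr m n q"
  shows "p = q"
  using assms sI_inj unfolding Ix_def by (auto split: if_splits)

lemma blk_rr_surj:
  assumes "q \<le> 2 * n" "1 \<le> s" "s \<le> m"
  shows "\<exists>p\<in>Ix m n. blk n p = q \<and> rr m n p = s"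
proof -
  consider "q = 0" | "1 \<le> q \<and> q \<le> n" | "q = n + 1" | "n + 1 < q" using assms by linarith
  then show ?thesis
  proof cases
    case 1
    then show ?thesis using assms by (intro bexI[of _ "(True, m - s, n)"]) (auto simp: Ix_def)
  next
    case 2
    then show ?thesis using assms by (intro bexI[of _ "(False, s - 1, q - 1)"]) (auto simp: Ix_def)
  next
    case 3
    then show ?thesis using assms by (intro bexI[of _ "(True, m - s, 0)"]) (auto simp: Ix_def)
  next
    case 4
    obtain i where "i < m" "sI m i = s" using sI_surj assms by blast
    then show ?thesis using assms 4 by (intro bexI[of _ "(True, i, q - n - 1)"]) (auto simp: Ix_def)
  qed
qed

lemma divmod_uniq:
  fixes b b' r r' m :: nat
  assumes "1 \<le> r" "r \<le> m" "1 \<le> r'" "r' \<le> m" "b * m + r = b' * m + r'"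
  shows "b = b' \<and> r = r'"
proof -
  have e: "b * m + (r - 1) = b' * m + (r' - 1)" using assms by simp
  have d: "(c * m + x) div m = c" if "x < m" for c x :: nat using that by simp
  have "(b * m + (r - 1)) div m = b" using assms(1,2) by (intro d) simp
  moreover have "(b' * m + (r' - 1)) div m = b'" using assms(3,4) by (intro d) simp
  ultimately have "b = b'" using e by simp
  then show ?thesis using assms by simp
qed

lemma lab_inj: "inj_on (lab m n) (Ix m n)"
proof
  fix p q assume p: "p \<in> Ix m n" and q: "q \<in> Ix m n" and e: "lab m n p = lab m n q"
  then have "blk n p = blk n q \<and> rr m n p = rr m n q"
    using divmod_uniq[of "rr m n p" m "rr m n q" "blk n p" "blk n q"] rr_range[OF p] rr_range[OF q]
    unfolding lab_def by blast
  then show "p = q" using blk_rr_inj p q by blast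
qed

lemma lab_image: "lab m n ` Ix m n = {1..(2 * n + 1) * m}"
proof
  show "lab m n ` Ix m n \<subseteq> {1..(2 * n + 1) * m}"
  proof
    fix k assume "k \<in> lab m n ` Ix m n"
    then obtain p where p: "p \<in> Ix m n" "k = lab m n p" by blast
    have "blk n p * m \<le> 2 * n * m" using blk_le[OF p(1)] by simp
    then have "1 \<le> k \<and> k \<le> 2 * n * m + m" using rr_range[OF p(1)] p(2) unfolding lab_def by linarith
    then show "k \<in> {1..(2 * n + 1) * m}" by (simp add: algebra_simps)
  qed
next
  show "{1..(2 * n + 1) * m} \<subseteq> lab m n ` Ix m n"
  proof
    fix k assume k: "k \<in> {1..(2 * n + 1) * m}"
    then have mpos: "m > 0" by (cases m) auto
    define q where "q = (k - 1) div m"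
    define s where "s = (k - 1) mod m + 1"
    have ks: "k = q * m + s" using k unfolding q_def s_def
      by (metis Suc_eq_plus1 add.assoc atLeastAtMost_iff div_mult_mod_eq le_add_diff_inverse2)
    have "k - 1 < (2 * n + 1) * m" using k by auto
    then have "q < 2 * n + 1" unfolding q_def by (simp add: div_less_iff_less_mult mpos)
    moreover have "1 \<le> s" "s \<le> m" using mpos unfolding s_def by (auto simp: Suc_leI)
    ultimately obtain p where "p \<in> Ix m n" "blk n p = q" "rr m n p = s"
      using blk_rr_surj[of q n s m] by auto
    then show "k \<in> lab m n ` Ix m n" using ks unfolding lab_def by auto
  qed
qed


definition fl :: "nat \<Rightarrow> nat \<Rightarrow> (nat \<times> nat) set \<Rightarrow> nat" where
  "fl m n e = (if Min (snd ` e) = Max (snd ` e)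
     then lab m n (True, if Max (fst ` e) = Min (fst ` e) + 1 then Min (fst ` e) else Max (fst ` e), Min (snd ` e))
     else lab m n (False, Min (fst ` e), Min (snd ` e)))"

lemma fl_Ed:
  assumes "m \<ge> 3" "p \<in> Ix m n"
  shows "fl m n (Ed m p) = lab m n p"
proof -
  obtain t i j where p: "p = (t, i, j)" by (cases p) auto
  show ?thesis
  proof (cases t)
    case True
    then have i: "i < m" using assms p unfolding Ix_def by auto
    show ?thesis
    proof (cases "i + 1 < m")
      case True
      then show ?thesis using \<open>t\<close> p by (simp add: fl_def)
    next
      case False
      then have "i = m - 1" using i by simp
      moreover have "m - Suc 0 \<noteq> Suc 0" using assms(1) by simp
      ultimately show ?thesis using \<open>t\<close> p assms(1) by (simp add: fl_def)
    qed
  next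
    case False
    then show ?thesis using p by (simp add: fl_def)
  qed
qed

definition prv :: "nat \<Rightarrow> nat \<Rightarrow> nat" where
  "prv m a = (if a = 0 then m - 1 else a - 1)"

lemma mod_prv: "i < m \<Longrightarrow> a < m \<Longrightarrow> ((i + 1) mod m = a) = (i = prv m a)"
  unfolding prv_def by (cases "i + 1 = m") auto

lemma nbhd:
  assumes "m \<ge> 3" "a < m" "b \<le> n"
  shows "{p \<in> Ix m n. (a, b) \<in> Ed m p} = {(True, a, b), (True, prv m a, b)}
     \<union> (if b < n then {(False, a, b)} else {}) \<union> (if 0 < b then {(False, a, b - 1)} else {})"
proof (rule set_eqI)
  fix p :: "bool \<times> nat \<times> nat"
  obtain t i j where p: "p = (t, i, j)" by (cases p) auto
  have pl: "prv m a < m" using assms unfolding prv_def by auto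
  show "p \<in> {p \<in> Ix m n. (a, b) \<in> Ed m p} \<longleftrightarrow> p \<in> {(True, a, b), (True, prv m a, b)}
     \<union> (if b < n then {(False, a, b)} else {}) \<union> (if 0 < b then {(False, a, b - 1)} else {})"
  proof (cases t)
    case True
    have "(True, i, j) \<in> Ix m n \<and> (a, b) \<in> Ed m (True, i, j) \<longleftrightarrow> (j = b \<and> (i = a \<or> i = prv m a))"
    proof
      assume h: "(True, i, j) \<in> Ix m n \<and> (a, b) \<in> Ed m (True, i, j)"
      then have "i < m" unfolding Ix_def by auto
      then show "j = b \<and> (i = a \<or> i = prv m a)" using h mod_prv[of i m a] assms by auto
    next
      assume h: "j = b \<and> (i = a \<or> i = prv m a)"
      then have "i < m" using pl assms by auto
      then show "(True, i, j) \<in> Ix m n \<and> (a, b) \<in> Ed m (True, i, j)"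
        using h mod_prv[of i m a] assms unfolding Ix_def by auto
    qed
    then show ?thesis using p True by auto
  next
    case False
    have "(False, i, j) \<in> Ix m n \<and> (a, b) \<in> Ed m (False, i, j) \<longleftrightarrow> i = a \<and> ((j = b \<and> b < n) \<or> (0 < b \<and> j = b - 1))"
      using assms unfolding Ix_def by auto
    then show ?thesis using p False by auto
  qed
qed

definition K :: "nat \<Rightarrow> nat \<Rightarrow> nat" where
  "K n b = (if b = n then n else if b = 0 then 2 * n + 3 else 2 * n + 4 * b + 3)"

definition off :: "nat \<Rightarrow> nat \<Rightarrow> nat \<Rightarrow> nat \<Rightarrow> nat" where
  "off m n a b = (if b = n \<or> b = 0 then (m - a) + (m - prv m a) + a + 1
      else sI m a + sI m (prv m a) + 2 * a + 2)"

lemma prv_ne: "m \<ge> 3 \<Longrightarrow> a < m \<Longrightarrow> prv m a \<noteq> a"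
  unfolding prv_def by auto

lemma S_eq:
  assumes "m \<ge> 3" "n \<ge> 2" "a < m" "b \<le> n"
  shows "(\<Sum>p\<in>{p \<in> Ix m n. (a, b) \<in> Ed m p}. lab m n p) = K n b * m + off m n a b"
proof -
  have ne: "prv m a \<noteq> a" using prv_ne assms by auto
  consider "b = n" | "b = 0" | "0 < b \<and> b < n" using assms by linarith
  then show ?thesis
  proof cases
    case 1
    then have "{p \<in> Ix m n. (a, b) \<in> Ed m p} = {(True, a, n), (True, prv m a, n), (False, a, n - 1)}"
      using nbhd[OF assms(1,3,4)] assms by auto
    then show ?thesis using 1 ne assms by (simp add: lab_def K_def off_def algebra_simps)
  next
    case 2
    then have "{p \<in> Ix m n. (a, b) \<in> Ed m p} = {(True, a, 0), (True, prv m a, 0), (False, a, 0)}"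
      using nbhd[OF assms(1,3,4)] assms by auto
    then show ?thesis using 2 ne assms by (simp add: lab_def K_def off_def algebra_simps)
  next
    case 3
    then have "{p \<in> Ix m n. (a, b) \<in> Ed m p} = {(True, a, b), (True, prv m a, b), (False, a, b), (False, a, b - 1)}"
      using nbhd[OF assms(1,3,4)] assms by auto
    moreover have "b - Suc 0 \<noteq> b" using 3 by auto
    ultimately show ?thesis using 3 ne assms by (simp add: lab_def K_def off_def algebra_simps)
  qed
qed


lemma sI_pair:
  assumes "1 \<le> a" "a < m"
  shows "sI m a + sI m (a - 1) = (if even a then m + 2 else m + 1)"
proof (cases "even a")
  case True
  then obtain k where k: "a = 2 * k" by (auto elim!: evenE)
  then have "a - 1 = 2 * (k - 1) + 1" "k \<ge> 1" using assms by auto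
  then show ?thesis using k assms True unfolding sI_def by auto
next
  case False
  then obtain k where k: "a = 2 * k + 1" by (auto elim!: oddE)
  then have "a - 1 = 2 * k" by auto
  then show ?thesis using k assms False unfolding sI_def by auto
qed

lemma off_bounds:
  assumes "m \<ge> 3" "a < m"
  shows "off m n a b < 4 * m \<and>
    (b = n \<or> b = 0 \<longrightarrow> off m n a b = (if a = 0 then m + 2 else 2 * m - a + 2)) \<and>
    (\<not> (b = n \<or> b = 0) \<longrightarrow> (if a = 0 then off m n a b \<le> m + 3
        else (off m n a b = 2 * a + m + 3 \<or> off m n a b = 2 * a + m + 4)))"
proof -
  have r: "sI m (m - 1) \<le> m" using sI_range[of "m - 1" m] assms by auto
  have s0: "sI m 0 = 1" unfolding sI_def by simp
  have p: "a \<noteq> 0 \<Longrightarrow> sI m a + sI m (a - 1) = m + 2 \<or> sI m a + sI m (a - 1) = m + 1"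
    using sI_pair[of a m] assms by (auto split: if_splits)
  show ?thesis
  proof (cases "a = 0")
    case True
    then show ?thesis using assms r s0 unfolding off_def prv_def by auto
  next
    case False
    then show ?thesis using assms p[OF False] unfolding off_def prv_def by auto
  qed
qed

lemma off_inj:
  assumes "m \<ge> 3" "a < m" "a' < m" "off m n a b = off m n a' b"
  shows "a = a'"
proof -
  have A: "off m n a b < 4 * m \<and>
    (b = n \<or> b = 0 \<longrightarrow> off m n a b = (if a = 0 then m + 2 else 2 * m - a + 2)) \<and>
    (\<not> (b = n \<or> b = 0) \<longrightarrow> (if a = 0 then off m n a b \<le> m + 3
        else (off m n a b = 2 * a + m + 3 \<or> off m n a b = 2 * a + m + 4)))"
    by (rule off_bounds[OF assms(1,2)])
  have B: "off m n a' b < 4 * m \<and>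
    (b = n \<or> b = 0 \<longrightarrow> off m n a' b = (if a' = 0 then m + 2 else 2 * m - a' + 2)) \<and>
    (\<not> (b = n \<or> b = 0) \<longrightarrow> (if a' = 0 then off m n a' b \<le> m + 3
        else (off m n a' b = 2 * a' + m + 3 \<or> off m n a' b = 2 * a' + m + 4)))"
    by (rule off_bounds[OF assms(1,3)])
  show ?thesis
  proof (cases "b = n \<or> b = 0")
    case True
    then have "off m n a b = (if a = 0 then m + 2 else 2 * m - a + 2)"
      "off m n a' b = (if a' = 0 then m + 2 else 2 * m - a' + 2)" using A B by blast+
    then show ?thesis using assms(2,3,4) by (cases "a = 0"; cases "a' = 0") auto
  next
    case False
    then have "(if a = 0 then off m n a b \<le> m + 3
        else (off m n a b = 2 * a + m + 3 \<or> off m n a b = 2 * a + m + 4))"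
      "(if a' = 0 then off m n a' b \<le> m + 3
        else (off m n a' b = 2 * a' + m + 3 \<or> off m n a' b = 2 * a' + m + 4))" using A B by blast+
    then show ?thesis using assms(2,3,4) by (cases "a = 0"; cases "a' = 0") auto
  qed
qed

lemma K_sep:
  assumes "n \<ge> 2" "b \<le> n" "b' \<le> n" "b \<noteq> b'"
  shows "K n b + 4 \<le> K n b' \<or> K n b' + 4 \<le> K n b"
  using assms unfolding K_def by auto

lemma key_uniq:
  fixes k k' o1 o2 m :: nat
  assumes "k * m + o1 = k' * m + o2" "o1 < 4 * m" "o2 < 4 * m"
    "k + 4 \<le> k' \<or> k' + 4 \<le> k"
  shows False
  using assms(4)
proof
  assume "k + 4 \<le> k'"
  then have "(k + 4) * m \<le> k' * m" by (rule mult_le_mono1)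
  then show False using assms(1,2) by (simp add: algebra_simps)
next
  assume "k' + 4 \<le> k"
  then have "(k' + 4) * m \<le> k * m" by (rule mult_le_mono1)
  then show False using assms(1,3) by (simp add: algebra_simps)
qed

theorem lemma4p1:
  fixes m n :: nat
  assumes "m \<ge> 3" and "n \<ge> 2"
  shows "antimagic (cart_prod (cycle_graph m) (path_graph (n + 1)))"
proof -
  define G where "G = cart_prod (cycle_graph m) (path_graph (n + 1))"
  have E: "edges G = Ed m ` Ix m n" unfolding G_def using edges_eq[OF assms(1)] .
  have V: "verts G = {0..<m} \<times> {0..<n+1}"
    unfolding G_def cart_prod_def cycle_graph_def path_graph_def by simp
  have flE: "\<And>p. p \<in> Ix m n \<Longrightarrow> fl m n (Ed m p) = lab m n p" using fl_Ed[OF assms(1)] by blast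
  have injEd: "inj_on (Ed m) (Ix m n)"
  proof
    fix p q assume "p \<in> Ix m n" "q \<in> Ix m n" "Ed m p = Ed m q"
    then have "lab m n p = lab m n q" using flE by metis
    then show "p = q" using lab_inj \<open>p \<in> Ix m n\<close> \<open>q \<in> Ix m n\<close> by (meson inj_onD)
  qed
  have injf: "inj_on (fl m n) (edges G)"
  proof
    fix x y assume "x \<in> edges G" "y \<in> edges G" "fl m n x = fl m n y"
    then obtain p q where "p \<in> Ix m n" "q \<in> Ix m n" "x = Ed m p" "y = Ed m q" using E by auto
    then show "x = y" using \<open>fl m n x = fl m n y\<close> flE lab_inj by (metis inj_onD)
  qed
  have imgf: "fl m n ` edges G = {1..(2 * n + 1) * m}"
  proof -
    have "fl m n ` edges G = lab m n ` Ix m n" unfolding E image_image using flE by (auto simp: image_iff)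
    then show ?thesis using lab_image by simp
  qed
  have bij: "bij_betw (fl m n) (edges G) {1..(2 * n + 1) * m}"
    using injf imgf unfolding bij_betw_def by blast
  then have cardE: "card (edges G) = (2 * n + 1) * m" using bij_betw_same_card by fastforce
  have VS: "vertex_sum G (fl m n) (a, b) = K n b * m + off m n a b" if ab: "a < m" "b \<le> n" for a b
  proof -
    have "{e \<in> edges G. (a, b) \<in> e} = Ed m ` {p \<in> Ix m n. (a, b) \<in> Ed m p}" unfolding E by auto
    moreover have "inj_on (Ed m) {p \<in> Ix m n. (a, b) \<in> Ed m p}" using injEd by (rule inj_on_subset) auto
    ultimately have "vertex_sum G (fl m n) (a, b) = (\<Sum>p\<in>{p \<in> Ix m n. (a, b) \<in> Ed m p}. fl m n (Ed m p))"
      unfolding vertex_sum_def by (simp add: sum.reindex)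
    also have "\<dots> = (\<Sum>p\<in>{p \<in> Ix m n. (a, b) \<in> Ed m p}. lab m n p)" using flE by simp
    also have "\<dots> = K n b * m + off m n a b" using S_eq[OF assms ab] .
    finally show ?thesis .
  qed
  have injV: "inj_on (vertex_sum G (fl m n)) (verts G)"
  proof
    fix x y assume x: "x \<in> verts G" and y: "y \<in> verts G" and e: "vertex_sum G (fl m n) x = vertex_sum G (fl m n) y"
    obtain a b where ab: "x = (a, b)" "a < m" "b \<le> n" using x V by auto
    obtain a' b' where ab': "y = (a', b')" "a' < m" "b' \<le> n" using y V by auto
    have eq: "K n b * m + off m n a b = K n b' * m + off m n a' b'" using e VS ab ab' by simp
    have o1: "off m n a b < 4 * m" using off_bounds[OF assms(1) ab(2)] by blast
    have o2: "off m n a' b' < 4 * m" using off_bounds[OF assms(1) ab'(2)] by blast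
    have "b = b'"
    proof (rule ccontr)
      assume "b \<noteq> b'"
      then show False using key_uniq[OF eq o1 o2] K_sep[OF assms(2) ab(3) ab'(3)] by blast
    qed
    then have "off m n a b = off m n a' b" using eq by simp
    then have "a = a'" using off_inj[OF assms(1) ab(2) ab'(2)] by blast
    then show "x = y" using ab ab' \<open>b = b'\<close> by simp
  qed
  have "antimagic_labeling G (fl m n)"
    unfolding antimagic_labeling_def cardE using bij injV by blast
  then show ?thesis unfolding antimagic_def G_def by blast
qed

end
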